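(* Let $G$ be a reaction network whose stoichiometric subspace is one-dimensional. If $cap_{pos}(G)<+\infty$, then $cap_{nondeg}(G)=cap_{pos}(G)$.
   Context: A reaction network $G$ has species $X_1,\dots,X_s$ and $m$ reactions $\sum_{i}\alpha_{ij}X_i\to\sum_i\beta_{ij}X_i$, with $\alpha_{ij},\beta_{ij}\in\mathbb Z_{\ge0}$ and $(\alpha_{1j},\dots,\alpha_{sj})\neq(\beta_{1j},\dots,\beta_{sj})$. The stoichiometric matrix $\mathcal N$ has entries $\beta_{ij}-\alpha_{ij}$; its image $S$ is the stoichiometric subspace. For $\kappa\in\mathbb R^m_{>0}$, mass-action kinetics gives $\dot x=f(\kappa;x)=\mathcal N(\kappa_1\prod_i x_i^{\alpha_{i1}},\dots,\kappa_m\prod_i x_i^{\alpha_{im}})^\top$. Stoichiometric compatibility classes are the sets $(x^0+S)\cap\mathbb R^s_{\ge0}$. A steady state is $x\in\mathbb R^s_{\ge0}$ with $f(\kappa;x)=0$; positive if $x\in\mathbb R^s_{>0}$; nondegenerate if $\mathrm{Jac}_f(x)(S)=S$. $cap_{pos}(G)$ (resp. $cap_{nondeg}(G)$) is the maximal $N\in\mathbb Z_{\ge0}\cup\{+\infty\}$ such that for some $\kappa$ and some compatibility class, $G$ has $N$ positive (resp. nondegenerate positive) steady states in that class. *)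

theory Defs
  imports "HOL-Analysis.Analysis" "HOL-Library.Extended_Nat"
begin

text \<open>Species are the elements of a finite type 's. A complex is a vector of
nonnegative integer stoichiometric coefficients ('s \<Rightarrow> nat). A reaction is a pair
(reactant complex alpha, product complex beta); a reaction network is the list of its
m reactions (reaction j is the j-th list element, j < m).\<close>

type_synonym 's complex = "'s \<Rightarrow> nat"
type_synonym 's network = "('s complex \<times> 's complex) list"

definition reaction_network :: "'s network \<Rightarrow> bool" where
  "reaction_network G \<longleftrightarrow> (\<forall>r \<in> set G. fst r \<noteq> snd r)"

definition cvec :: "'s::finite complex \<Rightarrow> real ^ 's" where
  "cvec a = (\<chi> i. real (a i))"

definition reaction_vec :: "'s::finite complex \<times> 's complex \<Rightarrow> real ^ 's" where
  "reaction_vec r = cvec (snd r) - cvec (fst r)"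

definition stoich_subspace :: "'s::finite network \<Rightarrow> (real ^ 's) set" where
  "stoich_subspace G = span (reaction_vec ` set G)"

definition monomial :: "'s::finite complex \<Rightarrow> real ^ 's \<Rightarrow> real" where
  "monomial a x = (\<Prod>i\<in>UNIV. (x $ i) ^ (a i))"

definition mass_action :: "'s::finite network \<Rightarrow> (nat \<Rightarrow> real) \<Rightarrow> real ^ 's \<Rightarrow> real ^ 's" where
  "mass_action G \<kappa> x = (\<Sum>j<length G. (\<kappa> j * monomial (fst (G ! j)) x) *\<^sub>R reaction_vec (G ! j))"

definition pos_rates :: "'s network \<Rightarrow> (nat \<Rightarrow> real) \<Rightarrow> bool" where
  "pos_rates G \<kappa> \<longleftrightarrow> (\<forall>j<length G. \<kappa> j > 0)"

definition compat_class :: "'s::finite network \<Rightarrow> real ^ 's \<Rightarrow> (real ^ 's) set" where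
  "compat_class G x0 = {x. x - x0 \<in> stoich_subspace G \<and> (\<forall>i. x $ i \<ge> 0)}"

definition pos_steady_states :: "'s::finite network \<Rightarrow> (nat \<Rightarrow> real) \<Rightarrow> real ^ 's \<Rightarrow> (real ^ 's) set" where
  "pos_steady_states G \<kappa> x0 =
     {x \<in> compat_class G x0. (\<forall>i. x $ i > 0) \<and> mass_action G \<kappa> x = 0}"

definition nondegenerate :: "'s::finite network \<Rightarrow> (nat \<Rightarrow> real) \<Rightarrow> real ^ 's \<Rightarrow> bool" where
  "nondegenerate G \<kappa> x \<longleftrightarrow>
     (\<exists>D. (mass_action G \<kappa> has_derivative D) (at x) \<and> D ` stoich_subspace G = stoich_subspace G)"

definition nondeg_pos_steady_states :: "'s::finite network \<Rightarrow> (nat \<Rightarrow> real) \<Rightarrow> real ^ 's \<Rightarrow> (real ^ 's) set" where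
  "nondeg_pos_steady_states G \<kappa> x0 = {x \<in> pos_steady_states G \<kappa> x0. nondegenerate G \<kappa> x}"

definition ecard :: "'a set \<Rightarrow> enat" where
  "ecard A = (if finite A then enat (card A) else \<infinity>)"

definition cap_pos :: "'s::finite network \<Rightarrow> enat" where
  "cap_pos G = (SUP p \<in> {(\<kappa>, x0). pos_rates G \<kappa>}. ecard (pos_steady_states G (fst p) (snd p)))"

definition cap_nondeg :: "'s::finite network \<Rightarrow> enat" where
  "cap_nondeg G = (SUP p \<in> {(\<kappa>, x0). pos_rates G \<kappa>}. ecard (nondeg_pos_steady_states G (fst p) (snd p)))"

end

theory Submission
  imports Defs "HOL-Computational_Algebra.Polynomial"
begin


lemma one_root:
  fixes f :: "real \<Rightarrow> real"
  assumes "continuous_on {a..b} f" "a \<le> b" "f a * f b < 0"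
  shows "\<exists>r. a < r \<and> r < b \<and> f r = 0"
proof (cases "f a < 0")
  case True
  then have "f b > 0" using assms(3) by (auto simp: mult_less_0_iff)
  then obtain x where "a \<le> x" "x \<le> b" "f x = 0" using IVT'[of f a 0 b] True assms by force
  moreover have "x \<noteq> a" "x \<noteq> b" using \<open>f x = 0\<close> True \<open>f b > 0\<close> by auto
  ultimately show ?thesis by force
next
  case False
  then have "f a > 0" "f b < 0" using assms(3) by (auto simp: mult_less_0_iff)
  then obtain x where "a \<le> x" "x \<le> b" "f x = 0" using IVT2'[of f b 0 a] assms by force
  moreover have "x \<noteq> a" "x \<noteq> b" using \<open>f x = 0\<close> \<open>f a > 0\<close> \<open>f b < 0\<close> by auto
  ultimately show ?thesis by force
qed

lemma two_roots:
  fixes f :: "real \<Rightarrow> real"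
  assumes "continuous_on {a..b} f" "a < m" "m < b" "f a * f m < 0" "f m * f b < 0"
  shows "\<exists>r1 r2. a < r1 \<and> r1 < m \<and> m < r2 \<and> r2 < b \<and> f r1 = 0 \<and> f r2 = 0"
proof -
  have c1: "continuous_on {a..m} f" "continuous_on {m..b} f"
    using assms by (auto intro: continuous_on_subset)
  obtain r1 where "a < r1" "r1 < m" "f r1 = 0" using one_root[OF c1(1)] assms by force
  moreover obtain r2 where "m < r2" "r2 < b" "f r2 = 0" using one_root[OF c1(2)] assms by force
  ultimately show ?thesis by blast
qed

lemma exists_at_right:
  assumes "eventually P (at_right (0::real))" shows "\<exists>x>0. P x"
proof -
  from assms obtain b where "b > 0" "\<forall>y>0. y < b \<longrightarrow> P y"
    unfolding eventually_at_right_field by auto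
  then show ?thesis by (intro exI[of _ "b/2"]) auto
qed

lemma ev_less: "(c::real) > 0 \<Longrightarrow> eventually (\<lambda>e. e < c) (at_right 0)"
  unfolding eventually_at_right_field by auto

lemma ev_neq: "eventually (\<lambda>e. e \<noteq> (c::real)) (at_right 0)"
proof (cases "c > 0")
  case True
  then show ?thesis unfolding eventually_at_right_field by (intro exI[of _ c]) simp
next
  case False
  then show ?thesis unfolding eventually_at_right_field by (intro exI[of _ 1]) simp
qed


lemma core:
  fixes H P :: "real poly" and I :: "real set" and \<eta> :: real
  assumes I: "open I" "convex I"
    and fin: "finite {t\<in>I. poly H t = 0}"
    and Ppos: "\<And>t. t\<in>I \<Longrightarrow> poly P t > 0"
    and eta: "\<eta> > 0"
  shows "\<exists>\<epsilon>. \<bar>\<epsilon>\<bar> < \<eta> \<and> (\<forall>t\<in>I. poly (H + smult \<epsilon> P) t = 0 \<longrightarrow> poly (pderiv (H + smult \<epsilon> P)) t \<noteq> 0)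
          \<and> enat (card {t\<in>I. poly H t = 0}) \<le> ecard {t\<in>I. poly (H + smult \<epsilon> P) t = 0}"
proof (cases "{t\<in>I. poly H t = 0} = {}")
  case True
  then show ?thesis using eta by (intro exI[of _ 0]) (auto simp: ecard_def)
next
  case False
  define T where "T = {t\<in>I. poly H t = 0}"
  define h where "h = poly H"
  define p where "p = poly P"
  obtain t0 where t0: "t0 \<in> T" using False T_def by auto
  have finT: "finite T" using fin T_def by simp
  have pe: "p x > 0" if "x \<in> I" for x using Ppos that p_def by auto
  define W where "W = pderiv H * P - H * pderiv P"
  have W0: "W \<noteq> 0"
  proof
    assume "W = 0"
    have "\<exists>c. \<forall>x\<in>I. h x / p x = c"
    proof (rule has_derivative_zero_constant[OF I(2)])
      fix x assume x: "x \<in> I"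
      have "DERIV (\<lambda>x. h x / p x) x :> (poly (pderiv H) x * p x - h x * poly (pderiv P) x) / (p x * p x)"
        unfolding h_def p_def using Ppos[OF x] by (intro DERIV_divide poly_DERIV) auto
      moreover have "poly (pderiv H) x * p x - h x * poly (pderiv P) x = poly W x"
        unfolding W_def h_def p_def by simp
      ultimately have "DERIV (\<lambda>x. h x / p x) x :> 0" using \<open>W = 0\<close> by simp
      then have "((\<lambda>x. h x / p x) has_derivative ((*) 0)) (at x)"
        by (simp add: has_field_derivative_def)
      moreover have "((*) (0::real)) = (\<lambda>h. 0)" by auto
      ultimately show "((\<lambda>x. h x / p x) has_derivative (\<lambda>h. 0)) (at x within I)"
        using has_derivative_at_withinI by metis
    qed
    then obtain c where c: "\<forall>x\<in>I. h x / p x = c" by blast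
    have "c = 0" using c t0 unfolding T_def h_def by force
    then have "I \<subseteq> T" using c pe unfolding T_def h_def by (metis (mono_tags, lifting) less_irrefl mem_Collect_eq subsetI divide_eq_0_iff)
    moreover obtain e where "e > 0" "ball t0 e \<subseteq> I" using I(1) t0 T_def openE by auto
    ultimately have "{t0 - e<..<t0 + e} \<subseteq> T" by (simp add: ball_eq_greaterThanLessThan)
    moreover have "t0 - e < t0 + e" using \<open>e > 0\<close> by simp
    ultimately show False using finite_subset[OF _ finT] infinite_Ioo_iff by blast
  qed
  have finW: "finite {t. poly W t = 0}" using poly_roots_finite W0 by blast
  define B where "B = (\<lambda>t. - (h t / p t)) ` {t\<in>I. poly W t = 0}"
  have finB: "finite B" using finW unfolding B_def by simp
  have ev_delta: "eventually (\<lambda>d. \<forall>t\<in>T. cball t d \<subseteq> I \<and> (\<forall>s\<in>T. s \<noteq> t \<longrightarrow> 2*d < \<bar>s - t\<bar>)) (at_right 0)"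
  proof (rule eventually_ball_finite[OF finT], rule ballI)
    fix t assume t: "t \<in> T"
    obtain e where e: "e > 0" "cball t e \<subseteq> I" using I(1) t T_def open_contains_cball by blast
    have 1: "eventually (\<lambda>d. cball t d \<subseteq> I) (at_right 0)"
      using ev_less[OF e(1)] by eventually_elim (use e in auto)
    have 2: "eventually (\<lambda>d. \<forall>s\<in>T. s \<noteq> t \<longrightarrow> 2*d < \<bar>s - t\<bar>) (at_right 0)"
    proof (rule eventually_ball_finite[OF finT], rule ballI)
      fix s assume "s \<in> T"
      show "eventually (\<lambda>d. s \<noteq> t \<longrightarrow> 2*d < \<bar>s - t\<bar>) (at_right 0)"
      proof (cases "s = t")
        case True then show ?thesis by simp
      next
        case False then have "\<bar>s-t\<bar>/2 > 0" by simp
        from ev_less[OF this] show ?thesis by eventually_elim auto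
      qed
    qed
    from 1 2 show "eventually (\<lambda>d. cball t d \<subseteq> I \<and> (\<forall>s\<in>T. s \<noteq> t \<longrightarrow> 2*d < \<bar>s - t\<bar>)) (at_right 0)"
      by eventually_elim auto
  qed
  obtain \<delta> where \<delta>: "\<delta> > 0" "\<forall>t\<in>T. cball t \<delta> \<subseteq> I \<and> (\<forall>s\<in>T. s \<noteq> t \<longrightarrow> 2*\<delta> < \<bar>s - t\<bar>)"
    using exists_at_right[OF ev_delta] by blast
  have Iint: "{t - \<delta>..t + \<delta>} \<subseteq> I" if "t \<in> T" for t
    using \<delta>(2) that by (simp add: cball_eq_atLeastAtMost)
  have inI: "t - \<delta> \<in> I" "t + \<delta> \<in> I" "t \<in> I" if "t \<in> T" for t
    using Iint[OF that] \<delta>(1) by auto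
  have hne: "h (t - \<delta>) \<noteq> 0 \<and> h (t + \<delta>) \<noteq> 0" if t: "t \<in> T" for t
  proof -
    have "t - \<delta> \<notin> T" "t + \<delta> \<notin> T"
      using \<delta> t by force+
    then show ?thesis using inI[OF t] unfolding T_def h_def by auto
  qed
  define Tpos where "Tpos = {t\<in>T. h (t-\<delta>) > 0 \<and> h (t+\<delta>) > 0}"
  define Tneg where "Tneg = {t\<in>T. h (t-\<delta>) < 0 \<and> h (t+\<delta>) < 0}"
  define \<sigma> :: real where "\<sigma> = (if card Tneg \<le> card Tpos then -1 else 1)"
  define Good where "Good = {t\<in>T. \<sigma> * h (t-\<delta>) < 0 \<and> \<sigma> * h (t+\<delta>) < 0}"
  define Bad where "Bad = {t\<in>T. \<sigma> * h (t-\<delta>) > 0 \<and> \<sigma> * h (t+\<delta>) > 0}"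
  have GB: "card Bad \<le> card Good"
  proof (cases "card Tneg \<le> card Tpos")
    case True
    then have "Good = Tpos" "Bad = Tneg" unfolding Good_def Bad_def Tpos_def Tneg_def \<sigma>_def by auto
    then show ?thesis using True by simp
  next
    case False
    then have "Good = Tneg" "Bad = Tpos" unfolding Good_def Bad_def Tpos_def Tneg_def \<sigma>_def by auto
    then show ?thesis using False by simp
  qed
  have sig: "\<sigma> = 1 \<or> \<sigma> = -1" by (auto simp: \<sigma>_def)
  have ev_e: "eventually (\<lambda>e. e < \<eta> \<and> (\<forall>t\<in>T. e * p (t-\<delta>) < \<bar>h (t-\<delta>)\<bar> \<and> e * p (t+\<delta>) < \<bar>h (t+\<delta>)\<bar>) \<and> (\<forall>b\<in>B. e \<noteq> \<sigma> * b)) (at_right 0)"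
  proof -
    have 1: "eventually (\<lambda>e. e < \<eta>) (at_right 0)" using ev_less eta .
    have 2: "eventually (\<lambda>e. \<forall>t\<in>T. e * p (t-\<delta>) < \<bar>h (t-\<delta>)\<bar> \<and> e * p (t+\<delta>) < \<bar>h (t+\<delta>)\<bar>) (at_right 0)"
    proof (rule eventually_ball_finite[OF finT], rule ballI)
      fix t assume t: "t \<in> T"
      have q: "\<bar>h (t-\<delta>)\<bar> / p (t-\<delta>) > 0" "\<bar>h (t+\<delta>)\<bar> / p (t+\<delta>) > 0"
        using hne[OF t] pe inI[OF t] by auto
      from ev_less[OF q(1)] ev_less[OF q(2)]
      show "eventually (\<lambda>e. e * p (t-\<delta>) < \<bar>h (t-\<delta>)\<bar> \<and> e * p (t+\<delta>) < \<bar>h (t+\<delta>)\<bar>) (at_right 0)"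
        by eventually_elim (use pe inI[OF t] in \<open>auto simp: pos_less_divide_eq\<close>)
    qed
    have 3: "eventually (\<lambda>e. \<forall>b\<in>B. e \<noteq> \<sigma> * b) (at_right 0)"
      by (rule eventually_ball_finite[OF finB]) (auto intro: ev_neq)
    from 1 2 3 show ?thesis by eventually_elim auto
  qed
  obtain e where e: "e > 0" "e < \<eta>" "\<forall>t\<in>T. e * p (t-\<delta>) < \<bar>h (t-\<delta>)\<bar> \<and> e * p (t+\<delta>) < \<bar>h (t+\<delta>)\<bar>"
     "\<forall>b\<in>B. e \<noteq> \<sigma> * b"
    using exists_at_right[OF ev_e] by blast
  define \<epsilon> where "\<epsilon> = \<sigma> * e"
  define H' where "H' = H + smult \<epsilon> P"
  define h' where "h' = poly H'"
  have h'eq: "h' x = h x + \<epsilon> * p x" for x by (simp add: h'_def H'_def h_def p_def)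
  have abs_eps: "\<bar>\<epsilon>\<bar> < \<eta>" using e sig by (auto simp: \<epsilon>_def)
  have nondeg: "\<forall>t\<in>I. poly H' t = 0 \<longrightarrow> poly (pderiv H') t \<noteq> 0"
  proof (intro ballI impI notI)
    fix t assume t: "t \<in> I" "poly H' t = 0" "poly (pderiv H') t = 0"
    have a: "h t = - \<epsilon> * p t" using t(2) h'eq[of t] h'_def by simp
    have b: "poly (pderiv H) t = - \<epsilon> * poly (pderiv P) t"
      using t(3) by (simp add: H'_def pderiv_add pderiv_smult)
    have "poly W t = 0" unfolding W_def using a b by (simp add: h_def p_def algebra_simps)
    then have "- (h t / p t) \<in> B" using t(1) unfolding B_def by auto
    moreover have "- (h t / p t) = \<epsilon>" using a pe[OF t(1)] by simp
    ultimately show False using e(4) sig by (auto simp: \<epsilon>_def)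
  qed
  have endp: "(h a > 0 \<longrightarrow> h' a > 0) \<and> (h a < 0 \<longrightarrow> h' a < 0)"
    if "e * p a < \<bar>h a\<bar>" "p a > 0" for a
    using sig that mult_pos_pos[OF e(1) that(2)] unfolding h'eq \<epsilon>_def by (elim disjE) (auto simp: abs_if)
  define R where "R = {t\<in>I. h' t = 0}"
  define J where "J = (\<lambda>t. {t - \<delta><..<t + \<delta>})"
  define c where "c = (\<lambda>t. if t \<in> Good then 2 else if t \<in> Bad then 0 else (1::nat))"
  have cont: "continuous_on A h'" for A unfolding h'_def by (intro continuous_intros)
  have GBd: "Good \<inter> Bad = {}" unfolding Good_def Bad_def by auto
  have cnt: "c t \<le> card (R \<inter> J t)" if t: "t \<in> T" and finR: "finite R" for t
  proof -
    have e1: "e * p (t-\<delta>) < \<bar>h (t-\<delta>)\<bar>" "e * p (t+\<delta>) < \<bar>h (t+\<delta>)\<bar>" using e(3) t by auto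
    have p1: "p (t-\<delta>) > 0" "p (t+\<delta>) > 0" "p t > 0" using pe inI[OF t] by auto
    have ht: "h t = 0" using t unfolding T_def h_def by simp
    have en1: "(h (t-\<delta>) > 0 \<longrightarrow> h' (t-\<delta>) > 0) \<and> (h (t-\<delta>) < 0 \<longrightarrow> h' (t-\<delta>) < 0)"
      using endp[OF e1(1) p1(1)] .
    have en2: "(h (t+\<delta>) > 0 \<longrightarrow> h' (t+\<delta>) > 0) \<and> (h (t+\<delta>) < 0 \<longrightarrow> h' (t+\<delta>) < 0)"
      using endp[OF e1(2) p1(2)] .
    have sub: "{x. t - \<delta> < x \<and> x < t + \<delta> \<and> h' x = 0} \<subseteq> R \<inter> J t"
      using Iint[OF t] unfolding R_def J_def by auto
    have finRJ: "finite (R \<inter> J t)" using finR by simp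
    show ?thesis
    proof (cases "t \<in> Good")
      case True
      have s1: "\<sigma> * h (t-\<delta>) < 0" "\<sigma> * h (t+\<delta>) < 0" using True unfolding Good_def by auto
      have h't: "h' t = \<sigma> * e * p t" using ht h'eq \<epsilon>_def by simp
      have q1: "\<sigma> * h' t > 0" using h't sig mult_pos_pos[OF e(1) p1(3)] by auto
      have q2: "\<sigma> * h' (t-\<delta>) < 0" "\<sigma> * h' (t+\<delta>) < 0" using sig s1 en1 en2 by auto
      have "h' (t-\<delta>) * h' t < 0" "h' t * h' (t+\<delta>) < 0"
        using sig q1 q2 by (auto simp: mult_less_0_iff)
      then obtain r1 r2 where r: "t - \<delta> < r1" "r1 < t" "t < r2" "r2 < t + \<delta>" "h' r1 = 0" "h' r2 = 0"
        using two_roots[OF cont, of "t - \<delta>" t "t + \<delta>"] \<delta>(1) by auto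
      then have "{r1, r2} \<subseteq> R \<inter> J t" using sub by auto
      then have "card {r1, r2} \<le> card (R \<inter> J t)" using card_mono finRJ by blast
      moreover have "card {r1, r2} = 2" using r by auto
      ultimately show ?thesis using True unfolding c_def by simp
    next
      case False
      show ?thesis
      proof (cases "t \<in> Bad")
        case True then show ?thesis using False unfolding c_def by simp
      next
        case nB: False
        have "h (t-\<delta>) * h (t+\<delta>) < 0"
          using False nB hne[OF t] sig t unfolding Good_def Bad_def
          by (auto simp: mult_less_0_iff)
        then have "h' (t-\<delta>) * h' (t+\<delta>) < 0"
          using en1 en2 by (auto simp: mult_less_0_iff)
        then obtain r where r: "t - \<delta> < r" "r < t + \<delta>" "h' r = 0"
          using one_root[OF cont, of "t - \<delta>" "t + \<delta>"] \<delta>(1) by auto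
        then have "{r} \<subseteq> R \<inter> J t" using sub by auto
        then have "card {r} \<le> card (R \<inter> J t)" using card_mono finRJ by blast
        then show ?thesis using False nB unfolding c_def by simp
      qed
    qed
  qed
  have count: "enat (card T) \<le> ecard R"
  proof (cases "finite R")
    case False then show ?thesis by (simp add: ecard_def)
  next
    case finR: True
    have disj: "\<forall>i\<in>T. \<forall>j\<in>T. i \<noteq> j \<longrightarrow> (R \<inter> J i) \<inter> (R \<inter> J j) = {}"
    proof (intro ballI impI)
      fix i j assume ij: "i \<in> T" "j \<in> T" "i \<noteq> j"
      have "2 * \<delta> < \<bar>j - i\<bar>" using \<delta>(2) ij by auto
      then show "(R \<inter> J i) \<inter> (R \<inter> J j) = {}" unfolding J_def by auto
    qed
    have "(\<Sum>t\<in>T. card (R \<inter> J t)) = card (\<Union>t\<in>T. R \<inter> J t)"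
      using card_UN_disjoint[OF finT _ disj] finR by simp
    also have "\<dots> \<le> card R" using finR by (intro card_mono) auto
    finally have A: "(\<Sum>t\<in>T. card (R \<inter> J t)) \<le> card R" .
    have "(\<Sum>t\<in>T. c t) \<le> (\<Sum>t\<in>T. card (R \<inter> J t))"
      using cnt finR by (intro sum_mono) auto
    moreover have "(\<Sum>t\<in>T. 1 + of_bool (t \<in> Good)) \<le> (\<Sum>t\<in>T. c t + of_bool (t \<in> Bad))"
      using GBd by (intro sum_mono) (auto simp: c_def)
    moreover have "(\<Sum>t\<in>T. 1 + of_bool (t \<in> Good)) = card T + card Good"
    proof -
      have "T \<inter> {x. x \<in> Good} = Good" unfolding Good_def by auto
      moreover have "(\<Sum>t\<in>T. (of_bool (t \<in> Good)::nat)) = of_nat (card (T \<inter> {x. x \<in> Good}))"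
        by (rule sum_of_bool_eq[OF finT finT])
      ultimately have "(\<Sum>t\<in>T. (of_bool (t \<in> Good)::nat)) = card Good" by simp
      then show ?thesis using sum.distrib[of "\<lambda>t. 1::nat" "\<lambda>t. of_bool (t \<in> Good)" T] by simp
    qed
    moreover have "(\<Sum>t\<in>T. c t + of_bool (t \<in> Bad)) = (\<Sum>t\<in>T. c t) + card Bad"
    proof -
      have "T \<inter> {x. x \<in> Bad} = Bad" unfolding Bad_def by auto
      moreover have "(\<Sum>t\<in>T. (of_bool (t \<in> Bad)::nat)) = of_nat (card (T \<inter> {x. x \<in> Bad}))"
        by (rule sum_of_bool_eq[OF finT finT])
      ultimately have "(\<Sum>t\<in>T. (of_bool (t \<in> Bad)::nat)) = card Bad" by simp
      then show ?thesis using sum.distrib[of c "\<lambda>t. of_bool (t \<in> Bad)" T] by simp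
    qed
    ultimately have "card T \<le> card R" using GB A by linarith
    then show ?thesis using finR by (simp add: ecard_def)
  qed
  show ?thesis
    apply (rule exI[of _ \<epsilon>])
    using abs_eps nondeg count unfolding H'_def R_def T_def h'_def by auto
qed



lemma ecard_mono: "A \<subseteq> B \<Longrightarrow> ecard A \<le> ecard B"
  unfolding ecard_def by (auto dest: finite_subset intro: card_mono)

lemma ecard_image: "inj_on f A \<Longrightarrow> ecard (f ` A) = ecard A"
  unfolding ecard_def by (auto simp: card_image finite_image_iff)

lemma span_scale_eq:
  assumes d: "d \<noteq> 0" shows "span {d *\<^sub>R v} = span {(v::'a::real_vector)}"
  unfolding real_vector.span_singleton
proof (intro equalityI subsetI)
  fix x assume "x \<in> range (\<lambda>k. k *\<^sub>R d *\<^sub>R v)"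
  then obtain k where "x = k *\<^sub>R d *\<^sub>R v" by auto
  then show "x \<in> range (\<lambda>k. k *\<^sub>R v)" by (intro image_eqI[of _ _ "k*d"]) auto
next
  fix x assume "x \<in> range (\<lambda>k. k *\<^sub>R v)"
  then obtain k where "x = k *\<^sub>R v" by auto
  then show "x \<in> range (\<lambda>k. k *\<^sub>R d *\<^sub>R v)" using d by (intro image_eqI[of _ _ "k/d"]) auto
qed

lemma monomial_hasderiv: "\<exists>D. (monomial a has_derivative D) (at x)"
  unfolding monomial_def
  by (rule exI, rule has_derivative_prod, rule has_derivative_power,
      rule bounded_linear_imp_has_derivative, rule bounded_linear_vec_nth)

lemma mass_action_diff: "mass_action G \<kappa> differentiable (at x)"
proof -
  have m: "monomial a differentiable (at x within UNIV)" for a :: "'a complex"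
    using monomial_hasderiv[of a x] by (auto simp: differentiable_def)
  show ?thesis unfolding mass_action_def
    by (intro differentiable_sum ballI differentiable_scaleR differentiable_mult differentiable_const m) auto
qed

definition Pm :: "real^'s::finite \<Rightarrow> real^'s \<Rightarrow> 's complex \<Rightarrow> real poly" where
  "Pm v x0 a = (\<Prod>i\<in>UNIV. [:x0$i, v$i:] ^ a i)"

definition Hp :: "'s::finite network \<Rightarrow> (nat \<Rightarrow> real) \<Rightarrow> real^'s \<Rightarrow> (nat \<Rightarrow> real) \<Rightarrow> real^'s \<Rightarrow> real poly" where
  "Hp G cc v \<kappa> x0 = (\<Sum>j<length G. smult (\<kappa> j * cc j) (Pm v x0 (fst (G!j))))"

definition Il :: "real^'s::finite \<Rightarrow> real^'s \<Rightarrow> real set" where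
  "Il v x0 = {t. \<forall>i. 0 < (x0 + t *\<^sub>R v)$i}"

lemma poly_Pm: "poly (Pm v x0 a) t = monomial a (x0 + t *\<^sub>R v)"
  unfolding Pm_def monomial_def by (simp add: poly_prod algebra_simps)

lemma Pm_pos: "t \<in> Il v x0 \<Longrightarrow> poly (Pm v x0 a) t > 0"
  unfolding poly_Pm monomial_def Il_def by (auto intro!: prod_pos)

lemma conv_aux:
  fixes A B u w :: real
  assumes "0 < A" "0 < B" "0 \<le> u" "0 \<le> w" "u + w = 1"
  shows "0 < u*A + w*B"
proof (cases "u > 0")
  case True
  then have "u*A > 0" using assms by simp
  moreover have "w*B \<ge> 0" using assms by simp
  ultimately show ?thesis by linarith
next
  case False
  then have "u = 0" "w = 1" using assms by auto
  then show ?thesis using assms by simp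
qed

lemma Il_open: "open (Il v x0)"
proof -
  have "Il v x0 = (\<Inter>i\<in>UNIV. {t. 0 < x0$i + t * v$i})" unfolding Il_def by auto
  moreover have "open {t. 0 < x0$i + t * v$i}" for i
    by (rule open_Collect_less) (auto intro!: continuous_intros)
  ultimately show ?thesis by auto
qed

lemma Il_convex: "convex (Il v x0)"
  unfolding convex_def
proof (intro ballI allI impI)
  fix x y u w :: real
  assume x: "x \<in> Il v x0" and y: "y \<in> Il v x0" and u: "0 \<le> u" "0 \<le> w" "u + w = 1"
  show "u *\<^sub>R x + w *\<^sub>R y \<in> Il v x0"
    unfolding Il_def
  proof (intro CollectI allI)
    fix i
    have a: "0 < x0$i + x * v$i" "0 < x0$i + y * v$i" using x y unfolding Il_def by auto
    have "x0$i + (u*x + w*y) * v$i = u * (x0$i + x * v$i) + w * (x0$i + y * v$i)"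
      using u(3) by (simp add: algebra_simps) (metis add.commute distrib_right mult_1 mult.commute)
    then show "0 < (x0 + (u *\<^sub>R x + w *\<^sub>R y) *\<^sub>R v) $ i"
      using conv_aux[OF a u] by simp
  qed
qed

locale setup1 =
  fixes G :: "('s::finite) network" and v :: "real^'s" and cc :: "nat \<Rightarrow> real"
  assumes v0: "v \<noteq> 0" and S: "stoich_subspace G = span {v}"
    and cc: "\<And>j. j < length G \<Longrightarrow> reaction_vec (G!j) = cc j *\<^sub>R v"
begin

lemma mass_eq: "mass_action G \<kappa> x = (\<Sum>j<length G. \<kappa> j * monomial (fst (G!j)) x * cc j) *\<^sub>R v"
proof -
  have "mass_action G \<kappa> x = (\<Sum>j<length G. (\<kappa> j * monomial (fst (G!j)) x * cc j) *\<^sub>R v)"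
    unfolding mass_action_def by (rule sum.cong) (auto simp: cc)
  then show ?thesis by (simp add: scaleR_sum_left)
qed

lemma poly_Hp: "poly (Hp G cc v \<kappa> x0) t *\<^sub>R v = mass_action G \<kappa> (x0 + t *\<^sub>R v)"
  unfolding Hp_def mass_eq by (simp add: poly_sum poly_Pm mult_ac)

lemma pss: "pos_steady_states G \<kappa> x0 = (\<lambda>t. x0 + t *\<^sub>R v) ` {t\<in>Il v x0. poly (Hp G cc v \<kappa> x0) t = 0}"
proof (intro equalityI subsetI)
  fix x assume x: "x \<in> pos_steady_states G \<kappa> x0"
  then have "x - x0 \<in> span {v}" using S unfolding pos_steady_states_def compat_class_def by auto
  then obtain t where t: "x - x0 = t *\<^sub>R v" unfolding real_vector.span_singleton by auto
  then have xe: "x = x0 + t *\<^sub>R v" by (simp add: algebra_simps)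
  have "mass_action G \<kappa> x = 0" using x unfolding pos_steady_states_def by auto
  then have "poly (Hp G cc v \<kappa> x0) t *\<^sub>R v = 0" using poly_Hp xe by simp
  then have "poly (Hp G cc v \<kappa> x0) t = 0" using v0 by simp
  moreover have "t \<in> Il v x0" using x xe unfolding pos_steady_states_def Il_def by auto
  ultimately show "x \<in> (\<lambda>t. x0 + t *\<^sub>R v) ` {t\<in>Il v x0. poly (Hp G cc v \<kappa> x0) t = 0}"
    using xe by auto
next
  fix x assume "x \<in> (\<lambda>t. x0 + t *\<^sub>R v) ` {t\<in>Il v x0. poly (Hp G cc v \<kappa> x0) t = 0}"
  then obtain t where t: "t \<in> Il v x0" "poly (Hp G cc v \<kappa> x0) t = 0" and xe: "x = x0 + t *\<^sub>R v" by auto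
  have "x - x0 \<in> stoich_subspace G" unfolding S real_vector.span_singleton using xe by auto
  moreover have "mass_action G \<kappa> x = 0" using poly_Hp[of \<kappa> x0 t] t xe by simp
  moreover have "\<forall>i. x $ i > 0" using t xe unfolding Il_def by auto
  ultimately show "x \<in> pos_steady_states G \<kappa> x0"
    unfolding pos_steady_states_def compat_class_def by (auto intro: less_imp_le)
qed

lemma inj_line: "inj_on (\<lambda>t. x0 + t *\<^sub>R v) A"
  using v0 by (auto simp: inj_on_def)

lemma nondeg:
  assumes t: "poly (pderiv (Hp G cc v \<kappa> x0)) t \<noteq> 0"
  shows "nondegenerate G \<kappa> (x0 + t *\<^sub>R v)"
proof -
  define H where "H = Hp G cc v \<kappa> x0"
  define d where "d = poly (pderiv H) t"
  have d0: "d \<noteq> 0" using t unfolding d_def H_def .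
  obtain D where D: "(mass_action G \<kappa> has_derivative D) (at (x0 + t *\<^sub>R v))"
    using mass_action_diff[of G \<kappa> "x0 + t *\<^sub>R v"] unfolding differentiable_def by blast
  have L: "((\<lambda>s. x0 + s *\<^sub>R v) has_derivative (\<lambda>s. s *\<^sub>R v)) (at t)"
    by (auto intro!: derivative_eq_intros)
  have c1: "((\<lambda>s. mass_action G \<kappa> (x0 + s *\<^sub>R v)) has_derivative (\<lambda>s. D (s *\<^sub>R v))) (at t)"
    using has_derivative_compose[OF L D] .
  have "(poly H has_derivative (*) d) (at t)"
    using poly_DERIV[of H t] unfolding d_def has_field_derivative_def .
  then have c2: "((\<lambda>s. poly H s *\<^sub>R v) has_derivative (\<lambda>s. (d * s) *\<^sub>R v)) (at t)"
    by (rule has_derivative_scaleR_left)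
  have feq: "(\<lambda>s. mass_action G \<kappa> (x0 + s *\<^sub>R v)) = (\<lambda>s. poly H s *\<^sub>R v)"
    using poly_Hp unfolding H_def by auto
  have "(\<lambda>s. D (s *\<^sub>R v)) = (\<lambda>s. (d * s) *\<^sub>R v)"
    using has_derivative_unique[OF c1] c2 feq by simp
  then have Dv: "D v = d *\<^sub>R v" by (metis mult.right_neutral scaleR_one)
  have lin: "linear D" using has_derivative_linear[OF D] .
  have "D ` span {v} = span (D ` {v})" using real_vector.linear_span_image[OF lin, of "{v}"] by simp
  also have "\<dots> = span {v}" using Dv span_scale_eq[OF d0] by simp
  finally show ?thesis unfolding nondegenerate_def S using D by blast
qed

end


lemma Hp_upd:
  assumes k: "k < length G" "cc k \<noteq> 0"
  shows "Hp G cc v (\<kappa>(k := \<kappa> k + \<epsilon> / cc k)) x0 = Hp G cc v \<kappa> x0 + smult \<epsilon> (Pm v x0 (fst (G!k)))"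
proof -
  have "Hp G cc v (\<kappa>(k := \<kappa> k + \<epsilon> / cc k)) x0 =
        (\<Sum>j<length G. smult (\<kappa> j * cc j) (Pm v x0 (fst (G!j))) + (if j = k then smult \<epsilon> (Pm v x0 (fst (G!j))) else 0))"
    unfolding Hp_def using k(2) by (intro sum.cong) (auto simp: distrib_right smult_add_left)
  also have "\<dots> = Hp G cc v \<kappa> x0 + smult \<epsilon> (Pm v x0 (fst (G!k)))"
    unfolding Hp_def using k(1) by (simp add: sum.distrib)
  finally show ?thesis .
qed

theorem theorem6p1:
  fixes G :: "('s::finite) network"
  assumes "reaction_network G"
    and "dim (stoich_subspace G) = 1"
    and "cap_pos G < \<infinity>"
  shows "cap_nondeg G = cap_pos G"
proof -
  define S where "S = stoich_subspace G"
  obtain B where B: "B \<subseteq> S" "independent B" "S \<subseteq> span B" "card B = dim S"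
    using real_vector.basis_exists by blast
  have "card B = 1" using B(4) assms(2) S_def by simp
  then obtain v where Bv: "B = {v}" by (rule card_1_singletonE)
  have v0: "v \<noteq> 0" using B(2) Bv by simp
  have "span {v} \<subseteq> S" using B(1) Bv unfolding S_def stoich_subspace_def
    by (metis real_vector.span_mono real_vector.span_span empty_subsetI insert_subset)
  then have Sv: "stoich_subspace G = span {v}" using B(3) Bv S_def by auto
  define cc where "cc j = (SOME c. reaction_vec (G!j) = c *\<^sub>R v)" for j
  have cc: "reaction_vec (G!j) = cc j *\<^sub>R v" if j: "j < length G" for j
  proof -
    have "reaction_vec (G!j) \<in> stoich_subspace G"
      unfolding stoich_subspace_def using j by (intro real_vector.span_base) auto
    then have "\<exists>c. reaction_vec (G!j) = c *\<^sub>R v" unfolding Sv real_vector.span_singleton by auto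
    then show ?thesis unfolding cc_def by (rule someI_ex)
  qed
  interpret setup1 G v cc using v0 Sv cc by unfold_locales auto
  obtain k where k: "k < length G" "cc k \<noteq> 0"
  proof (rule ccontr)
    assume "\<not> thesis"
    then have z: "\<And>j. j < length G \<Longrightarrow> cc j = 0" using that by blast
    have "reaction_vec ` set G \<subseteq> {0}"
    proof
      fix y assume "y \<in> reaction_vec ` set G"
      then obtain j where "j < length G" "y = reaction_vec (G!j)" by (auto simp: in_set_conv_nth)
      then show "y \<in> {0}" using z cc by simp
    qed
    then have "stoich_subspace G \<subseteq> span {0}" unfolding stoich_subspace_def by (rule real_vector.span_mono)
    then have "v \<in> {0}" using Sv real_vector.span_base[of v "{v}"] by auto
    then show False using v0 by simp
  qed
  have le: "cap_nondeg G \<le> cap_pos G"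
    unfolding cap_nondeg_def cap_pos_def
    by (intro SUP_subset_mono order_refl ecard_mono) (auto simp: nondeg_pos_steady_states_def)
  define Dom :: "((nat \<Rightarrow> real) \<times> (real^'s)) set" where "Dom = {(\<kappa>, x0). pos_rates G \<kappa>}"
  define F where "F p = ecard (pos_steady_states G (fst p) (snd p))" for p :: "(nat \<Rightarrow> real) \<times> (real^'s)"
  have capF: "cap_pos G = Sup (F ` Dom)" unfolding cap_pos_def F_def Dom_def by simp
  have ne: "F ` Dom \<noteq> {}" unfolding Dom_def pos_rates_def by (auto intro!: exI[of _ "\<lambda>_. 1"])
  have finF: "finite (F ` Dom)"
  proof (rule ccontr)
    assume "infinite (F ` Dom)"
    then have "cap_pos G = \<infinity>" unfolding capF Sup_enat_def using ne by simp
    then show False using assms(3) by simp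
  qed
  have "cap_pos G \<in> F ` Dom" unfolding capF Sup_enat_def using ne finF by simp
  then obtain \<kappa> x0 where p: "pos_rates G \<kappa>" "F (\<kappa>, x0) = cap_pos G" unfolding Dom_def by auto
  define T where "T = {t\<in>Il v x0. poly (Hp G cc v \<kappa> x0) t = 0}"
  have FT: "F (\<kappa>, x0) = ecard T" unfolding F_def T_def pss by (simp add: ecard_image inj_line)
  have finT: "finite T" using FT p(2) assms(3) by (auto simp: ecard_def split: if_splits)
  define P where "P = Pm v x0 (fst (G!k))"
  define \<eta> where "\<eta> = \<kappa> k * \<bar>cc k\<bar>"
  have eta: "\<eta> > 0" using p(1) k unfolding \<eta>_def pos_rates_def by simp
  obtain \<epsilon> where \<epsilon>: "\<bar>\<epsilon>\<bar> < \<eta>"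
    "\<forall>t\<in>Il v x0. poly (Hp G cc v \<kappa> x0 + smult \<epsilon> P) t = 0 \<longrightarrow> poly (pderiv (Hp G cc v \<kappa> x0 + smult \<epsilon> P)) t \<noteq> 0"
    "enat (card T) \<le> ecard {t\<in>Il v x0. poly (Hp G cc v \<kappa> x0 + smult \<epsilon> P) t = 0}"
    using core[where I = "Il v x0" and H = "Hp G cc v \<kappa> x0" and P = P and \<eta> = \<eta>, OF Il_open Il_convex _ _ eta] finT Pm_pos unfolding T_def P_def
    by blast
  define \<kappa>' where "\<kappa>' = \<kappa>(k := \<kappa> k + \<epsilon> / cc k)"
  have Heq: "Hp G cc v \<kappa>' x0 = Hp G cc v \<kappa> x0 + smult \<epsilon> P"
    unfolding \<kappa>'_def P_def using Hp_upd[where k = k and G = G and cc = cc, OF k] .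
  have "\<bar>\<epsilon> / cc k\<bar> < \<kappa> k"
    using \<epsilon>(1) k(2) unfolding \<eta>_def by (simp add: abs_divide divide_less_eq)
  then have "\<kappa> k + \<epsilon> / cc k > 0" by linarith
  then have pr': "pos_rates G \<kappa>'" using p(1) unfolding pos_rates_def \<kappa>'_def by auto
  have sub: "(\<lambda>t. x0 + t *\<^sub>R v) ` {t\<in>Il v x0. poly (Hp G cc v \<kappa>' x0) t = 0} \<subseteq> nondeg_pos_steady_states G \<kappa>' x0"
    unfolding nondeg_pos_steady_states_def pss using \<epsilon>(2) Heq nondeg by auto
  have "cap_pos G = ecard T" using p(2) FT by simp
  also have "\<dots> \<le> ecard {t\<in>Il v x0. poly (Hp G cc v \<kappa>' x0) t = 0}"
    using \<epsilon>(3) finT Heq by (simp add: ecard_def)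
  also have "\<dots> = ecard ((\<lambda>t. x0 + t *\<^sub>R v) ` {t\<in>Il v x0. poly (Hp G cc v \<kappa>' x0) t = 0})"
    by (simp add: ecard_image inj_line)
  also have "\<dots> \<le> ecard (nondeg_pos_steady_states G \<kappa>' x0)" by (rule ecard_mono[OF sub])
  also have "\<dots> \<le> cap_nondeg G"
    unfolding cap_nondeg_def using pr' by (intro SUP_upper2[of "(\<kappa>', x0)"]) auto
  finally show ?thesis using le by simp
qed

end
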